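(* Let $S$ be a $\tau$-mutation system over $\mathcal{A}=\{a_0,\dots,a_{d-1}\}$ with starting word $w$ of length $m$, fix $k\in\mathbb{N}$ with $m\ge k$, and let $\mathbf{M}^{(k)}$ be the $k$-substitution matrix. Then for every $n\in\mathbb{N}$, \[\mathbb{E}\big[\mathbf{fr}^{(k)}_{S(n)}\big]=\frac{\mathbb{E}\big[\mathbf{ct}^{(k)}_{S(n)}\big]}{m+n(\tau-1)}=\frac{1}{m+n(\tau-1)}\prod_{j=0}^{n-1}\frac{1}{m+j(\tau-1)}\Big(\mathbf{M}^{(k)}+(m+j(\tau-1)-k)\mathbf{I}\Big)\mathbf{ct}^{(k)}_w .\]
   Context: Let $\mathcal{A}=\{a_0,\dots,a_{d-1}\}$ be a finite alphabet and $\mathcal{A}^\star$ the set of finite nonempty words. A mutation law assigns to each $a_t$ a finitely supported probability distribution $\mathbb{P}_{a_t}$ on $\mathcal{A}^\star$; $\vartheta(a_t)$ is a random word with law $\mathbb{P}_{a_t}$; it is a $\tau$-mutation law if every $\mathbb{P}_{a_t}$ is supported on $\mathcal{A}^\tau$. A mutation step on $w=w_0\cdots w_{m-1}$ picks $i$ uniformly in $\{0,\dots,m-1\}$ and replaces $w_i$ by an independent sample of $\vartheta(w_i)$. A mutation system: $S(0)=w$, $S(n)=\vartheta(S(n-1))$ with independent randomness at each step. $\mathrm{ct}_v(u)$ is the number of $i\in\{0,\dots,|v|-1\}$ with $v_i\cdots v_{i+|u|-1}=u$ (indices cyclic mod $|v|$); $\mathbf{ct}^{(k)}_v=(\mathrm{ct}_v(u))_{u\in\mathcal{A}^k}$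 in lexicographic order, $\mathbf{fr}^{(k)}_v=\mathbf{ct}^{(k)}_v/|v|$. The $k$-substitution matrix $\mathbf{M}^{(k)}$ is the $d^k\times d^k$ matrix with \[\mathbf{M}^{(k)}_{u,v}=\sum_{l\ge1}\sum_{\eta\in\mathcal{A}^l}\sum_{t\in[d]}\Pr(\vartheta(a_t)=\eta)\Big(\sum_{j=1}^{k-1}\mathbb{1}[v_j=a_t]\,\mathbb{1}\big[(v_0\cdots v_{j-1}\eta v_{j+1}\cdots v_{k-1})_{[k]}=u\big]+\sum_{j=0}^{l-1}\mathbb{1}[v_0=a_t]\,\mathbb{1}\big[(\eta v_1\cdots v_{k-1})_{j+[k]}=u\big]\Big),\] where $x_{j+[k]}=x_j\cdots x_{j+k-1}$ and $x_{[k]}$ is the first $k$ symbols of $x$. *)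

theory Defs
  imports "HOL-Probability.Probability"
begin

(* Alphabet A = {a_0,...,a_{d-1}} is encoded as {0..<d} (a_t = t); words are nat lists. *)

definition words :: "nat \<Rightarrow> nat \<Rightarrow> nat list set" where
  "words d k = {u. length u = k \<and> set u \<subseteq> {..<d}}"

definition mutation_law :: "nat \<Rightarrow> (nat \<Rightarrow> nat list pmf) \<Rightarrow> bool" where
  "mutation_law d P \<longleftrightarrow> (\<forall>t<d. finite (set_pmf (P t)) \<and>
      (\<forall>\<eta>\<in>set_pmf (P t). \<eta> \<noteq> [] \<and> set \<eta> \<subseteq> {..<d}))"

definition tau_mutation_law :: "nat \<Rightarrow> nat \<Rightarrow> (nat \<Rightarrow> nat list pmf) \<Rightarrow> bool" where
  "tau_mutation_law d \<tau> P \<longleftrightarrow> mutation_law d P \<and>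
      (\<forall>t<d. \<forall>\<eta>\<in>set_pmf (P t). length \<eta> = \<tau>)"

definition mutation_step :: "(nat \<Rightarrow> nat list pmf) \<Rightarrow> nat list \<Rightarrow> nat list pmf" where
  "mutation_step P w = bind_pmf (pmf_of_set {..<length w})
      (\<lambda>i. map_pmf (\<lambda>\<eta>. take i w @ \<eta> @ drop (Suc i) w) (P (w ! i)))"

primrec mutation_system :: "(nat \<Rightarrow> nat list pmf) \<Rightarrow> nat list \<Rightarrow> nat \<Rightarrow> nat list pmf" where
  "mutation_system P w 0 = return_pmf w"
| "mutation_system P w (Suc n) = bind_pmf (mutation_system P w n) (mutation_step P)"

definition ct :: "nat list \<Rightarrow> nat list \<Rightarrow> nat" where
  "ct v u = card {i. i < length v \<and> (\<forall>j<length u. v ! ((i + j) mod length v) = u ! j)}"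

definition fr :: "nat list \<Rightarrow> nat list \<Rightarrow> real" where
  "fr v u = real (ct v u) / real (length v)"

type_synonym wmat = "nat list \<Rightarrow> nat list \<Rightarrow> real"
type_synonym wvec = "nat list \<Rightarrow> real"

definition wmat_mult :: "nat \<Rightarrow> nat \<Rightarrow> wmat \<Rightarrow> wmat \<Rightarrow> wmat" where
  "wmat_mult d k A B = (\<lambda>u v. \<Sum>x\<in>words d k. A u x * B x v)"

definition wmat_vec :: "nat \<Rightarrow> nat \<Rightarrow> wmat \<Rightarrow> wvec \<Rightarrow> wvec" where
  "wmat_vec d k A x = (\<lambda>u. \<Sum>v\<in>words d k. A u v * x v)"

definition wmat_id :: wmat where
  "wmat_id = (\<lambda>u v. if u = v then 1 else 0)"

primrec wmat_prod :: "nat \<Rightarrow> nat \<Rightarrow> (nat \<Rightarrow> wmat) \<Rightarrow> nat \<Rightarrow> wmat" where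
  "wmat_prod d k A 0 = wmat_id"
| "wmat_prod d k A (Suc n) = wmat_mult d k (wmat_prod d k A n) (A n)"

definition subst_matrix :: "nat \<Rightarrow> nat \<Rightarrow> (nat \<Rightarrow> nat list pmf) \<Rightarrow> wmat" where
  "subst_matrix d k P = (\<lambda>u v. \<Sum>t<d. \<Sum>\<eta>\<in>set_pmf (P t). pmf (P t) \<eta> *
     ( (\<Sum>j\<in>{1..k-1}. if v ! j = t \<and> take k (take j v @ \<eta> @ drop (Suc j) v) = u then 1 else 0)
     + (\<Sum>j<length \<eta>. if v ! 0 = t \<and> take k (drop j (\<eta> @ drop 1 v)) = u then 1 else 0)))"

end

theory Submission
  imports Defs
begin


definition per :: "nat list \<Rightarrow> nat \<Rightarrow> nat" where
  "per v n = v ! (n mod length v)"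

definition win :: "nat \<Rightarrow> nat list \<Rightarrow> nat \<Rightarrow> nat list" where
  "win k v p = map (\<lambda>h. per v (p + h)) [0..<k]"

lemma per_periodic: "per v (n + length v) = per v n"
  by (simp add: per_def)

lemma win_periodic: "win k v (p + length v) = win k v p"
  unfolding win_def per_def
proof -
  have "\<And>h. (p + length v + h) mod length v = (p + h) mod length v"
    by (metis add.commute add.left_commute mod_add_self2)
  then show "map (\<lambda>h. v ! ((p + length v + h) mod length v)) [0..<k] = map (\<lambda>h. v ! ((p + h) mod length v)) [0..<k]"
    by simp
qed

lemma length_win[simp]: "length (win k v p) = k"
  by (simp add: win_def)

lemma nth_win[simp]: "h < k \<Longrightarrow> win k v p ! h = per v (p + h)"
  by (simp add: win_def)

lemma ct_win: "length u = k \<Longrightarrow> ct v u = card {p. p < length v \<and> win k v p = u}"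
  unfolding ct_def
  apply (rule arg_cong[where f=card])
  apply (auto simp: list_eq_iff_nth_eq per_def)
  done

lemma ct_sum: "length u = k \<Longrightarrow> real (ct v u) = (\<Sum>p<length v. if win k v p = u then 1 else 0)"
proof -
  assume "length u = k"
  then have "ct v u = card {p. p < length v \<and> win k v p = u}" by (rule ct_win)
  also have "{p. p < length v \<and> win k v p = u} = {..<length v} \<inter> {p. win k v p = u}" by auto
  finally show ?thesis by (simp add: sum.If_cases)
qed

lemma sum_shift_periodic:
  fixes g :: "nat \<Rightarrow> 'a::comm_monoid_add"
  assumes "\<And>p. g (p + L) = g p"
  shows "(\<Sum>p<L. g (p + s)) = (\<Sum>p<L. g p)"
proof (induction s)
  case 0 then show ?case by simp
next
  case (Suc s)
  show ?case
  proof (cases L)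
    case 0 then show ?thesis by simp
  next
    case (Suc L')
    have "(\<Sum>p<L. g (p + Suc s)) = (\<Sum>p<Suc L'. g (Suc p + s))" using Suc by simp
    also have "\<dots> = (\<Sum>p<L'. g (Suc p + s)) + g (Suc L' + s)" by (simp only: sum.lessThan_Suc)
    also have "g (Suc L' + s) = g s" using assms[of s] Suc by (simp add: add.commute)
    also have "(\<Sum>p<L'. g (Suc p + s)) + g s = (\<Sum>p<Suc L'. g (p + s))"
      by (simp only: sum.lessThan_Suc_shift add.commute) simp
    finally show ?thesis using Suc.IH Suc by simp
  qed
qed

lemma sum_interval_periodic:
  fixes g :: "nat \<Rightarrow> 'a::comm_monoid_add"
  assumes "\<And>p. g (p + L) = g p"
  shows "(\<Sum>p\<in>{s..<s+L}. g p) = (\<Sum>p<L. g p)"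
proof -
  have "(\<Sum>p\<in>{s..<s+L}. g p) = (\<Sum>p<L. g (p + s))"
    using sum.shift_bounds_nat_ivl[of g 0 s L] by (simp add: lessThan_atLeast0 add.commute)
  also have "\<dots> = (\<Sum>p<L. g p)" using assms by (rule sum_shift_periodic)
  finally show ?thesis .
qed



lemma mod_between: "(L::nat) \<le> n \<Longrightarrow> n < 2 * L \<Longrightarrow> n mod L = n - L"
  by (simp add: le_mod_geq)

lemma sum_split_lt:
  fixes f :: "nat \<Rightarrow> 'a::comm_monoid_add"
  shows "(\<Sum>t<a+b. f t) = (\<Sum>t<a. f t) + (\<Sum>t<b. f (a + t))"
  by (induction b) (simp_all add: add.assoc)

lemma sum_rev_k:
  fixes f :: "nat \<Rightarrow> 'a::comm_monoid_add"
  shows "(\<Sum>s<k. f s) = (\<Sum>j<k. f (k - 1 - j))"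
  by (rule sum.reindex_bij_witness[where i="\<lambda>j. k - 1 - j" and j="\<lambda>s. k - 1 - s"]) auto

lemma sum_rev_k1:
  fixes f :: "nat \<Rightarrow> 'a::comm_monoid_add"
  shows "(\<Sum>s<k - 1. f s) = (\<Sum>j\<in>{1..k-1}. f (k - 1 - j))"
  by (rule sum.reindex_bij_witness[where i="\<lambda>j. k - 1 - j" and j="\<lambda>s. k - 1 - s"]) auto

locale mut =
  fixes v \<eta> :: "nat list" and i :: nat
  assumes i_lt: "i < length v" and eta_ne: "\<eta> \<noteq> []"
begin

abbreviation "L \<equiv> length v"
abbreviation "l \<equiv> length \<eta>"
definition "v' = take i v @ \<eta> @ drop (Suc i) v"

lemma len_v': "length v' = L - 1 + l"
  using i_lt by (simp add: v'_def)

lemma l_pos: "1 \<le> l" using eta_ne by (cases \<eta>) auto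

lemma F1: "h < l \<Longrightarrow> per v' (i + h) = \<eta> ! h"
  using i_lt len_v' by (simp add: per_def v'_def nth_append)

lemma F2: assumes "t < L - 1" shows "per v' (i + l + t) = per v (i + 1 + t)"
proof (cases "i + 1 + t < L")
  case True
  then have "i + l + t < length v'" using len_v' by simp
  then have "per v' (i + l + t) = v' ! (i + l + t)" by (simp add: per_def)
  also have "\<dots> = v ! (i + 1 + t)" using True i_lt by (simp add: v'_def nth_append)
  finally show ?thesis using True by (simp add: per_def)
next
  case False
  have "i + 1 + t - L < i" using assms False by linarith
  have l1: "length v' \<le> i + l + t" "i + l + t < 2 * length v'" using False len_v' assms eta_ne i_lt by auto
  have "per v' (i + l + t) = v' ! (i + l + t - length v')" using l1 by (simp add: per_def mod_between)
  also have "i + l + t - length v' = i + 1 + t - L" using len_v' False assms by simp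
  also have "v' ! (i + 1 + t - L) = v ! (i + 1 + t - L)"
    using False assms i_lt \<open>i + 1 + t - L < i\<close> by (simp add: v'_def nth_append)
  also have "(i + 1 + t - L) = (i + 1 + t) mod L" using False assms i_lt by (simp add: mod_between)
  finally show ?thesis by (simp add: per_def)
qed

lemma F3: "per v' (n + length v') = per v' n"
  by (rule per_periodic)

lemma WA: assumes "t < L - k" "k \<le> L" shows "win k v' (i + l + t) = win k v (i + 1 + t)"
proof (rule nth_equalityI)
  fix h assume "h < length (win k v' (i + l + t))"
  then have h: "h < k" by simp
  have "per v' (i + l + t + h) = per v' (i + l + (t + h))" by (simp add: add.assoc)
  also have "\<dots> = per v (i + 1 + (t + h))" using assms h by (intro F2) linarith
  finally show "win k v' (i + l + t) ! h = win k v (i + 1 + t) ! h" using h by (simp add: add.assoc)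
qed simp

lemma WB: assumes "1 \<le> j" "j < k" "k \<le> L"
  shows "win k v' (i + l + (L - 1 - j)) =
    take k (take j (win k v (i+L-j)) @ \<eta> @ drop (Suc j) (win k v (i+L-j)))"
    (is "?A = take k ?B")
proof (rule nth_equalityI)
  have "length ?B \<ge> k" using assms l_pos by (simp add: min_def)
  then show "length ?A = length (take k ?B)" by simp
next
  fix h assume "h < length ?A"
  then have h: "h < k" by simp
  have "?A ! h = per v' (i + l + (L - 1 - j) + h)" using h by simp
  also have "\<dots> = ?B ! h"
  proof -
    consider (a) "h < j" | (b) "j \<le> h" "h < j + l" | (c) "j + l \<le> h" by linarith
    then show ?thesis
    proof cases
      case a
      have "per v' (i + l + (L - 1 - j) + h) = per v' (i + l + (L - 1 - j + h))" by (simp add: add.assoc)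
      also have "\<dots> = per v (i + 1 + (L - 1 - j + h))" using a assms by (intro F2) linarith
      also have "i + 1 + (L - 1 - j + h) = i + L - j + h" using assms by linarith
      finally show ?thesis using a assms by (simp add: nth_append)
    next
      case b
      have "i + l + (L - 1 - j) + h = i + (h - j) + length v'" using b assms len_v' by simp
      then have "per v' (i + l + (L - 1 - j) + h) = per v' (i + (h - j))" by (metis F3)
      also have "\<dots> = \<eta> ! (h - j)" using b by (intro F1) linarith
      moreover have "h - j < l" using b by linarith
      ultimately show ?thesis using b assms by (simp add: nth_append)
    next
      case c
      have "i + l + (L - 1 - j) + h = i + l + (h - j - l) + length v'" using c assms len_v' by simp
      then have "per v' (i + l + (L - 1 - j) + h) = per v' (i + l + (h - j - l))" by (metis F3)
      also have "\<dots> = per v (i + 1 + (h - j - l))" using c h assms by (intro F2) linarith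
      also have "\<dots> = per v (i + 1 + (h - j - l) + L)" by (rule per_periodic[symmetric])
      also have "i + 1 + (h - j - l) + L = i + L - j + (Suc j + (h - j - l))" using c assms by linarith
      finally have e: "per v' (i + l + (L - 1 - j) + h) = per v (i + L - j + (Suc j + (h - j - l)))" .
      have "Suc j + (h - j - l) < k" using c h eta_ne by (cases \<eta>) auto
      moreover have "\<not> h - j < l" using c by linarith
      ultimately show ?thesis using c assms e by (simp add: nth_append)
    qed
  qed
  finally show "?A ! h = take k ?B ! h" using h by (metis nth_take)
qed

lemma WC: assumes "j' < l" "1 \<le> k" "k \<le> L"
  shows "win k v' (i + l + (L - 1 + j')) = take k (drop j' (\<eta> @ drop 1 (win k v i)))"
    (is "?A = take k ?B")
proof (rule nth_equalityI)
  have "length ?B \<ge> k" using assms by simp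
  then show "length ?A = length (take k ?B)" by simp
next
  fix h assume "h < length ?A"
  then have h: "h < k" by simp
  have "?A ! h = per v' (i + l + (L - 1 + j') + h)" using h by simp
  also have "\<dots> = ?B ! h"
  proof (cases "j' + h < l")
    case True
    have "i + l + (L - 1 + j') + h = i + (j' + h) + length v'" using assms len_v' by simp
    then have "per v' (i + l + (L - 1 + j') + h) = per v' (i + (j' + h))" by (metis F3)
    also have "\<dots> = \<eta> ! (j' + h)" using True by (intro F1)
    moreover have "h < l - j'" using True by linarith
    ultimately show ?thesis using True assms by (simp add: nth_append)
  next
    case False
    have "i + l + (L - 1 + j') + h = i + l + (j' + h - l) + length v'" using False assms len_v' by simp
    then have "per v' (i + l + (L - 1 + j') + h) = per v' (i + l + (j' + h - l))" by (metis F3)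
    also have "\<dots> = per v (i + 1 + (j' + h - l))" using False h assms by (intro F2) linarith
    finally have e: "per v' (i + l + (L - 1 + j') + h) = per v (i + (1 + (j' + h - l)))" by (simp add: add.assoc)
    have "1 + (j' + h - l) < k" using False h assms by linarith
    moreover have "\<not> h < l - j'" using False by linarith
    ultimately show ?thesis using False assms e by (simp add: nth_append add.commute)
  qed
  finally show "?A ! h = take k ?B ! h" using h by (metis nth_take)
qed

lemma local_identity:
  assumes k1: "1 \<le> k" and kL: "k \<le> L"
  shows "(\<Sum>q<length v'. if win k v' q = u then 1 else 0::real)
       + (\<Sum>j<k. if win k v (i + L - j) = u then 1 else 0)
     = (\<Sum>p<L. if win k v p = u then 1 else 0)
       + (\<Sum>j\<in>{1..k-1}. if take k (take j (win k v (i+L-j)) @ \<eta> @ drop (Suc j) (win k v (i+L-j))) = u then 1 else 0)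
       + (\<Sum>j<l. if take k (drop j (\<eta> @ drop 1 (win k v i))) = u then 1 else 0)"
proof -
  define g' where "g' q = (if win k v' q = u then 1 else 0::real)" for q
  define g where "g p = (if win k v p = u then 1 else 0::real)" for p
  have per': "g' (q + length v') = g' q" for q unfolding g'_def by (simp only: win_periodic)
  have per: "g (q + L) = g q" for q unfolding g_def by (simp only: win_periodic)
  have Lsplit: "length v' = (L - k) + ((k - 1) + l)" using len_v' k1 kL by simp
  have "(\<Sum>q<length v'. g' q) = (\<Sum>t<length v'. g' (t + (i + l)))"
    by (rule sum_shift_periodic[symmetric]) (rule per')
  also have "\<dots> = (\<Sum>t<L - k. g' (t + (i + l))) + (\<Sum>t<k-1. g' (L - k + t + (i + l)))
      + (\<Sum>t<l. g' (L - k + (k - 1 + t) + (i + l)))"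
    unfolding Lsplit sum_split_lt by (simp add: add.assoc)
  also have "(\<Sum>t<L - k. g' (t + (i + l))) = (\<Sum>t<L - k. g (t + (i + 1)))"
  proof (rule sum.cong[OF refl])
    fix t assume "t \<in> {..<L - k}"
    then have "win k v' (i + l + t) = win k v (i + 1 + t)" using kL by (intro WA) auto
    then show "g' (t + (i + l)) = g (t + (i + 1))" unfolding g'_def g_def by (simp add: add.commute)
  qed
  also have "(\<Sum>t<k-1. g' (L - k + t + (i + l))) = (\<Sum>j\<in>{1..k-1}. g' (L - k + (k - 1 - j) + (i + l)))"
    by (rule sum_rev_k1)
  also have "\<dots> = (\<Sum>j\<in>{1..k-1}. if take k (take j (win k v (i+L-j)) @ \<eta> @ drop (Suc j) (win k v (i+L-j))) = u then 1 else 0)"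
  proof (rule sum.cong[OF refl])
    fix j assume j: "j \<in> {1..k-1}"
    have e: "L - k + (k - 1 - j) + (i + l) = i + l + (L - 1 - j)" using j kL by auto
    have w: "win k v' (i + l + (L - 1 - j)) = take k (take j (win k v (i+L-j)) @ \<eta> @ drop (Suc j) (win k v (i+L-j)))"
      using j kL by (intro WB) auto
    show "g' (L - k + (k - 1 - j) + (i + l)) = (if take k (take j (win k v (i+L-j)) @ \<eta> @ drop (Suc j) (win k v (i+L-j))) = u then 1 else 0)"
      unfolding g'_def by (simp only: e w)
  qed
  also have "(\<Sum>t<l. g' (L - k + (k - 1 + t) + (i + l))) = (\<Sum>j<l. if take k (drop j (\<eta> @ drop 1 (win k v i))) = u then 1 else 0)"
  proof (rule sum.cong[OF refl])
    fix j assume j: "j \<in> {..<l}"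
    have e: "L - k + (k - 1 + j) + (i + l) = i + l + (L - 1 + j)" using j kL k1 by auto
    have w: "win k v' (i + l + (L - 1 + j)) = take k (drop j (\<eta> @ drop 1 (win k v i)))"
      using j kL k1 by (intro WC) auto
    show "g' (L - k + (k - 1 + j) + (i + l)) = (if take k (drop j (\<eta> @ drop 1 (win k v i))) = u then 1 else 0)"
      unfolding g'_def by (simp only: e w)
  qed
  finally have lhs: "(\<Sum>q<length v'. g' q) = (\<Sum>t<L - k. g (t + (i + 1))) + (\<Sum>j\<in>{1..k-1}. if take k (take j (win k v (i+L-j)) @ \<eta> @ drop (Suc j) (win k v (i+L-j))) = u then 1 else 0)
     + (\<Sum>j<l. if take k (drop j (\<eta> @ drop 1 (win k v i))) = u then 1 else 0)" .
  have "(\<Sum>p<L. g p) = (\<Sum>t<L. g (t + (i + 1)))"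
    by (rule sum_shift_periodic[symmetric]) (rule per)
  also have "\<dots> = (\<Sum>t<L - k. g (t + (i + 1))) + (\<Sum>t<k. g (L - k + t + (i + 1)))"
    using kL sum_split_lt[of "\<lambda>t. g (t + (i + 1))" "L - k" k] by (simp add: add.assoc)
  also have "(\<Sum>t<k. g (L - k + t + (i + 1))) = (\<Sum>j<k. g (L - k + (k - 1 - j) + (i + 1)))"
    by (rule sum_rev_k)
  also have "\<dots> = (\<Sum>j<k. g (i + L - j))"
  proof (rule sum.cong[OF refl])
    fix j assume "j \<in> {..<k}"
    then have "L - k + (k - 1 - j) + (i + 1) = i + L - j" using kL by auto
    then show "g (L - k + (k - 1 - j) + (i + 1)) = g (i + L - j)" by (simp only:)
  qed
  finally have rhs: "(\<Sum>p<L. g p) = (\<Sum>t<L - k. g (t + (i + 1))) + (\<Sum>j<k. g (i + L - j))" .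
  show ?thesis using lhs rhs unfolding g_def[symmetric] g'_def[symmetric] by simp
qed

end



lemma M_split:
  assumes x0: "x ! 0 < d" and xj: "\<And>j. j \<in> {1..k-1} \<Longrightarrow> x ! j < d"
  shows "subst_matrix d k P u x =
     (\<Sum>j\<in>{1..k-1}. \<Sum>\<eta>\<in>set_pmf (P (x!j)). pmf (P (x!j)) \<eta> *
        (if take k (take j x @ \<eta> @ drop (Suc j) x) = u then 1 else 0))
   + (\<Sum>\<eta>\<in>set_pmf (P (x!0)). pmf (P (x!0)) \<eta> *
        (\<Sum>j<length \<eta>. if take k (drop j (\<eta> @ drop 1 x)) = u then 1 else 0))"
proof -
  define cB where "cB j \<eta> = (if take k (take j x @ \<eta> @ drop (Suc j) x) = u then 1 else 0::real)" for j \<eta>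
  define cC where "cC \<eta> = (\<Sum>j<length \<eta>. if take k (drop j (\<eta> @ drop 1 x)) = u then 1 else 0::real)" for \<eta>
  have "subst_matrix d k P u x = (\<Sum>t<d. \<Sum>\<eta>\<in>set_pmf (P t). pmf (P t) \<eta> *
       (\<Sum>j\<in>{1..k-1}. if x ! j = t then cB j \<eta> else 0))
     + (\<Sum>t<d. \<Sum>\<eta>\<in>set_pmf (P t). pmf (P t) \<eta> * (if x ! 0 = t then cC \<eta> else 0))"
    unfolding subst_matrix_def sum.distrib[symmetric] distrib_left[symmetric]
  proof (intro sum.cong refl arg_cong2[where f="(*)"])
    fix t \<eta>
    show "(\<Sum>j\<in>{1..k - 1}. if x ! j = t \<and> take k (take j x @ \<eta> @ drop (Suc j) x) = u then 1 else 0) +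
          (\<Sum>j<length \<eta>. if x ! 0 = t \<and> take k (drop j (\<eta> @ drop 1 x)) = u then 1 else 0) =
          (\<Sum>j\<in>{1..k - 1}. if x ! j = t then cB j \<eta> else 0) + (if x ! 0 = t then cC \<eta> else 0)"
      unfolding cB_def cC_def by (cases "x ! 0 = t") (auto intro!: sum.cong)
  qed
  also have "(\<Sum>t<d. \<Sum>\<eta>\<in>set_pmf (P t). pmf (P t) \<eta> * (if x ! 0 = t then cC \<eta> else 0))
      = (\<Sum>t<d. if x ! 0 = t then (\<Sum>\<eta>\<in>set_pmf (P t). pmf (P t) \<eta> * cC \<eta>) else 0)"
    by (intro sum.cong refl) auto
  also have "\<dots> = (\<Sum>\<eta>\<in>set_pmf (P (x!0)). pmf (P (x!0)) \<eta> * cC \<eta>)"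
    using x0 by (simp add: sum.delta)
  also have "(\<Sum>t<d. \<Sum>\<eta>\<in>set_pmf (P t). pmf (P t) \<eta> * (\<Sum>j\<in>{1..k-1}. if x ! j = t then cB j \<eta> else 0))
      = (\<Sum>t<d. \<Sum>j\<in>{1..k-1}. if x ! j = t then (\<Sum>\<eta>\<in>set_pmf (P t). pmf (P t) \<eta> * cB j \<eta>) else 0)"
  proof (intro sum.cong refl)
    fix t
    have "(\<Sum>\<eta>\<in>set_pmf (P t). pmf (P t) \<eta> * (\<Sum>j\<in>{1..k-1}. if x ! j = t then cB j \<eta> else 0))
      = (\<Sum>\<eta>\<in>set_pmf (P t). \<Sum>j\<in>{1..k-1}. if x ! j = t then pmf (P t) \<eta> * cB j \<eta> else 0)"
      unfolding sum_distrib_left by (intro sum.cong refl) simp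
    also have "\<dots> = (\<Sum>j\<in>{1..k-1}. \<Sum>\<eta>\<in>set_pmf (P t). if x ! j = t then pmf (P t) \<eta> * cB j \<eta> else 0)"
      by (rule sum.swap)
    also have "\<dots> = (\<Sum>j\<in>{1..k-1}. if x ! j = t then (\<Sum>\<eta>\<in>set_pmf (P t). pmf (P t) \<eta> * cB j \<eta>) else 0)"
      by (intro sum.cong refl) auto
    finally show "(\<Sum>\<eta>\<in>set_pmf (P t). pmf (P t) \<eta> * (\<Sum>j\<in>{1..k-1}. if x ! j = t then cB j \<eta> else 0))
      = (\<Sum>j\<in>{1..k-1}. if x ! j = t then (\<Sum>\<eta>\<in>set_pmf (P t). pmf (P t) \<eta> * cB j \<eta>) else 0)" .
  qed
  also have "\<dots> = (\<Sum>j\<in>{1..k-1}. \<Sum>t<d. if x ! j = t then (\<Sum>\<eta>\<in>set_pmf (P t). pmf (P t) \<eta> * cB j \<eta>) else 0)"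
    by (rule sum.swap)
  also have "\<dots> = (\<Sum>j\<in>{1..k-1}. \<Sum>\<eta>\<in>set_pmf (P (x!j)). pmf (P (x!j)) \<eta> * cB j \<eta>)"
    using xj by (intro sum.cong refl) (simp add: sum.delta)
  finally show ?thesis unfolding cB_def cC_def .
qed

lemma finite_words: "finite (words d k)"
proof -
  have "words d k = {xs. set xs \<subseteq> {..<d} \<and> length xs = k}" unfolding words_def by auto
  then show ?thesis using finite_lists_length_eq[of "{..<d}" k] by simp
qed

lemma per_in_set: "v \<noteq> [] \<Longrightarrow> per v n \<in> set v"
  unfolding per_def by simp

lemma win_words: "set v \<subseteq> {..<d} \<Longrightarrow> v \<noteq> [] \<Longrightarrow> win k v p \<in> words d k"
  unfolding words_def win_def using per_in_set by fastforce

lemma sum_ct_win: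
  assumes "\<And>p. win k v p \<in> words d k"
  shows "(\<Sum>x\<in>words d k. f x * real (ct v x)) = (\<Sum>p<length v. f (win k v p))"
proof -
  have "(\<Sum>x\<in>words d k. f x * real (ct v x)) = (\<Sum>x\<in>words d k. \<Sum>p<length v. if win k v p = x then f x else 0)"
  proof (intro sum.cong refl)
    fix x assume "x \<in> words d k"
    then have "length x = k" by (simp add: words_def)
    then show "f x * real (ct v x) = (\<Sum>p<length v. if win k v p = x then f x else 0)"
      by (simp add: ct_sum sum_distrib_left if_distrib cong: if_cong)
  qed
  also have "\<dots> = (\<Sum>p<length v. \<Sum>x\<in>words d k. if win k v p = x then f x else 0)"
    by (rule sum.swap)
  also have "\<dots> = (\<Sum>p<length v. f (win k v p))"
    using assms finite_words by (intro sum.cong refl) (simp add: sum.delta)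
  finally show ?thesis .
qed


lemma step_expect:
  assumes ml: "mutation_law d P" and sv: "set v \<subseteq> {..<d}" and k1: "1 \<le> k"
    and kL: "k \<le> length v" and u: "u \<in> words d k"
  shows "measure_pmf.expectation (mutation_step P v) (\<lambda>v'. real (ct v' u)) * real (length v)
     = (real (length v) - real k) * real (ct v u) + (\<Sum>x\<in>words d k. subst_matrix d k P u x * real (ct v x))"
proof -
  define L where "L = length v"
  have L0: "0 < L" using k1 kL unfolding L_def by linarith
  have vne: "v \<noteq> []" using L0 L_def by auto
  have lu: "length u = k" using u by (simp add: words_def)
  have vi: "v ! i < d" if "i < L" for i using sv that L_def nth_mem by blast
  have perd: "per v n < d" for n using per_in_set[OF vne] sv by blast
  have fin: "finite (set_pmf (P (v ! i)))" if "i < L" for i using ml vi[OF that] by (simp add: mutation_law_def)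
  have ne: "\<eta> \<noteq> []" if "i < L" "\<eta> \<in> set_pmf (P (v ! i))" for i \<eta>
    using ml vi[OF that(1)] that(2) by (simp add: mutation_law_def)
  define I :: "bool \<Rightarrow> real" where "I b = (if b then 1 else 0)" for b
  define cB where "cB x j \<eta> = I (take k (take j x @ \<eta> @ drop (Suc j) x) = u)" for x j \<eta>
  define cC where "cC x \<eta> = (\<Sum>j<length \<eta>. I (take k (drop j (\<eta> @ drop 1 x)) = u))" for x \<eta>
  define Bt where "Bt i \<eta> = (\<Sum>j\<in>{1..k-1}. cB (win k v (i + L - j)) j \<eta>)" for i \<eta>
  define Ct where "Ct i \<eta> = cC (win k v i) \<eta>" for i \<eta>
  define Rem where "Rem i = (\<Sum>j<k. I (win k v (i + L - j) = u))" for i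
  define C0 where "C0 = (\<Sum>p<L. I (win k v p = u))"
  define T where "T i = (\<Sum>\<eta>\<in>set_pmf (P (v ! i)). pmf (P (v ! i)) \<eta> * (Bt i \<eta> + Ct i \<eta>))" for i
  define E where "E i = (\<Sum>\<eta>\<in>set_pmf (P (v ! i)). real (ct (take i v @ \<eta> @ drop (Suc i) v) u) * pmf (P (v ! i)) \<eta>)" for i
  have C0ct: "real (ct v u) = C0" unfolding C0_def I_def L_def using lu by (simp add: ct_sum)
  have loc: "real (ct (take i v @ \<eta> @ drop (Suc i) v) u) = C0 - Rem i + Bt i \<eta> + Ct i \<eta>"
    if i: "i < L" and eta: "\<eta> \<in> set_pmf (P (v ! i))" for i \<eta>
  proof -
    interpret mut v \<eta> i using i ne[OF i eta] L_def by unfold_locales auto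
    have "real (ct v' u) = (\<Sum>q<length v'. if win k v' q = u then 1 else 0)" using lu by (simp add: ct_sum)
    then show ?thesis using local_identity[OF k1 kL, of u] unfolding v'_def Bt_def Ct_def cB_def cC_def Rem_def C0_def I_def L_def
      by simp
  qed
  have E1: "measure_pmf.expectation (mutation_step P v) (\<lambda>v'. real (ct v' u)) = (\<Sum>i<L. E i) / real L"
  proof -
    have "measure_pmf.expectation (mutation_step P v) (\<lambda>v'. real (ct v' u))
       = (\<Sum>i\<in>{..<L}. measure_pmf.expectation (map_pmf (\<lambda>\<eta>. take i v @ \<eta> @ drop (Suc i) v) (P (v ! i))) (\<lambda>v'. real (ct v' u)) /\<^sub>R real (card {..<L}))"
      unfolding mutation_step_def L_def[symmetric]
      by (rule pmf_expectation_bind_pmf_of_set) (use L0 fin in auto)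
    also have "\<dots> = (\<Sum>i<L. E i / real L)"
    proof (intro sum.cong refl)
      fix i assume "i \<in> {..<L}"
      then have i: "i < L" by simp
      show "measure_pmf.expectation (map_pmf (\<lambda>\<eta>. take i v @ \<eta> @ drop (Suc i) v) (P (v ! i))) (\<lambda>v'. real (ct v' u)) /\<^sub>R real (card {..<L}) = E i / real L"
        unfolding E_def using fin[OF i] by (simp add: integral_measure_pmf_real[of "set_pmf (P (v ! i))"] divide_inverse_commute)
    qed
    finally show ?thesis by (simp add: sum_divide_distrib)
  qed
  have E2: "E i = C0 - Rem i + T i" if i: "i < L" for i
  proof -
    have "E i = (\<Sum>\<eta>\<in>set_pmf (P (v ! i)). (C0 - Rem i) * pmf (P (v ! i)) \<eta> + pmf (P (v ! i)) \<eta> * (Bt i \<eta> + Ct i \<eta>))"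
      unfolding E_def by (intro sum.cong refl) (simp add: loc[OF i] algebra_simps)
    also have "\<dots> = (C0 - Rem i) * (\<Sum>\<eta>\<in>set_pmf (P (v ! i)). pmf (P (v ! i)) \<eta>) + T i"
      unfolding T_def by (simp add: sum.distrib sum_distrib_left)
    also have "(\<Sum>\<eta>\<in>set_pmf (P (v ! i)). pmf (P (v ! i)) \<eta>) = 1"
      using fin[OF i] by (intro sum_pmf_eq_1) auto
    finally show ?thesis by simp
  qed
  have per_win: "I (win k v (p + L) = u) = I (win k v p = u)" for p
    unfolding L_def by (simp only: win_periodic)
  have R: "(\<Sum>i<L. Rem i) = real k * C0"
  proof -
    have "(\<Sum>i<L. Rem i) = (\<Sum>j<k. \<Sum>i<L. I (win k v (i + (L - j)) = u))"
      unfolding Rem_def using kL L_def by (subst sum.swap) (intro sum.cong refl, auto)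
    also have "\<dots> = (\<Sum>j<k. C0)"
      unfolding C0_def by (intro sum.cong refl sum_shift_periodic per_win)
    finally show ?thesis by simp
  qed
  have MT: "(\<Sum>x\<in>words d k. subst_matrix d k P u x * real (ct v x)) = (\<Sum>i<L. T i)"
  proof -
    define F where "F p j = (\<Sum>\<eta>\<in>set_pmf (P (per v (p + j))). pmf (P (per v (p + j))) \<eta> * cB (win k v p) j \<eta>)" for p j
    have "(\<Sum>x\<in>words d k. subst_matrix d k P u x * real (ct v x)) = (\<Sum>p<L. subst_matrix d k P u (win k v p))"
      unfolding L_def using sum_ct_win[of k v d "\<lambda>x. subst_matrix d k P u x"] win_words[OF sv vne] by simp
    also have "\<dots> = (\<Sum>p<L. (\<Sum>j\<in>{1..k-1}. F p j) + (\<Sum>\<eta>\<in>set_pmf (P (per v p)). pmf (P (per v p)) \<eta> * cC (win k v p) \<eta>))"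
    proof (rule sum.cong[OF refl])
      fix p
      have "subst_matrix d k P u (win k v p) =
         (\<Sum>j\<in>{1..k-1}. \<Sum>\<eta>\<in>set_pmf (P (win k v p!j)). pmf (P (win k v p!j)) \<eta> *
            (if take k (take j (win k v p) @ \<eta> @ drop (Suc j) (win k v p)) = u then 1 else 0))
       + (\<Sum>\<eta>\<in>set_pmf (P (win k v p!0)). pmf (P (win k v p!0)) \<eta> *
            (\<Sum>j<length \<eta>. if take k (drop j (\<eta> @ drop 1 (win k v p))) = u then 1 else 0))"
        using k1 perd by (intro M_split) auto
      also have "\<dots> = (\<Sum>j\<in>{1..k-1}. F p j) + (\<Sum>\<eta>\<in>set_pmf (P (per v p)). pmf (P (per v p)) \<eta> * cC (win k v p) \<eta>)"
        unfolding F_def cB_def cC_def I_def using k1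
        by (intro arg_cong2[where f="(+)"] sum.cong refl) auto
      finally show "subst_matrix d k P u (win k v p) = (\<Sum>j\<in>{1..k-1}. F p j) + (\<Sum>\<eta>\<in>set_pmf (P (per v p)). pmf (P (per v p)) \<eta> * cC (win k v p) \<eta>)" .
    qed
    also have "\<dots> = (\<Sum>j\<in>{1..k-1}. \<Sum>p<L. F p j) + (\<Sum>p<L. \<Sum>\<eta>\<in>set_pmf (P (per v p)). pmf (P (per v p)) \<eta> * cC (win k v p) \<eta>)"
      by (simp add: sum.distrib sum.swap[of _ "{..<L}"])
    also have "(\<Sum>j\<in>{1..k-1}. \<Sum>p<L. F p j) = (\<Sum>j\<in>{1..k-1}. \<Sum>i<L. F (i + (L - j)) j)"
    proof (rule sum.cong[OF refl])
      fix j
      have "F (p + L) j = F p j" for p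
        unfolding F_def L_def by (simp only: win_periodic add.commute[of _ j] add.assoc[symmetric] per_periodic)
      then show "(\<Sum>p<L. F p j) = (\<Sum>i<L. F (i + (L - j)) j)"
        using sum_shift_periodic[of "\<lambda>p. F p j" L "L - j"] by simp
    qed
    also have "\<dots> = (\<Sum>i<L. \<Sum>\<eta>\<in>set_pmf (P (v ! i)). pmf (P (v ! i)) \<eta> * Bt i \<eta>)"
    proof -
      have "(\<Sum>j\<in>{1..k-1}. \<Sum>i<L. F (i + (L - j)) j) = (\<Sum>i<L. \<Sum>j\<in>{1..k-1}. F (i + (L - j)) j)"
        by (rule sum.swap)
      also have "\<dots> = (\<Sum>i<L. \<Sum>\<eta>\<in>set_pmf (P (v ! i)). pmf (P (v ! i)) \<eta> * Bt i \<eta>)"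
      proof (rule sum.cong[OF refl])
        fix i assume i: "i \<in> {..<L}"
        have "(\<Sum>j\<in>{1..k-1}. F (i + (L - j)) j) = (\<Sum>j\<in>{1..k-1}. \<Sum>\<eta>\<in>set_pmf (P (v ! i)). pmf (P (v ! i)) \<eta> * cB (win k v (i + L - j)) j \<eta>)"
        proof (rule sum.cong[OF refl])
          fix j assume j: "j \<in> {1..k-1}"
          have "i + (L - j) + j = i + L" using j kL L_def by auto
          then have "per v (i + (L - j) + j) = v ! i" using i L_def by (simp add: per_def)
          moreover have "i + (L - j) = i + L - j" using j kL L_def by auto
          ultimately show "F (i + (L - j)) j = (\<Sum>\<eta>\<in>set_pmf (P (v ! i)). pmf (P (v ! i)) \<eta> * cB (win k v (i + L - j)) j \<eta>)"
            unfolding F_def by simp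
        qed
        also have "\<dots> = (\<Sum>\<eta>\<in>set_pmf (P (v ! i)). pmf (P (v ! i)) \<eta> * Bt i \<eta>)"
          unfolding Bt_def by (subst sum.swap) (simp add: sum_distrib_left)
        finally show "(\<Sum>j\<in>{1..k-1}. F (i + (L - j)) j) = (\<Sum>\<eta>\<in>set_pmf (P (v ! i)). pmf (P (v ! i)) \<eta> * Bt i \<eta>)" .
      qed
      finally show ?thesis .
    qed
    also have "(\<Sum>p<L. \<Sum>\<eta>\<in>set_pmf (P (per v p)). pmf (P (per v p)) \<eta> * cC (win k v p) \<eta>)
       = (\<Sum>i<L. \<Sum>\<eta>\<in>set_pmf (P (v ! i)). pmf (P (v ! i)) \<eta> * Ct i \<eta>)"
      unfolding Ct_def L_def by (rule sum.cong[OF refl]) (simp add: per_def)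
    finally show ?thesis unfolding T_def by (simp add: sum.distrib distrib_left)
  qed
  have "measure_pmf.expectation (mutation_step P v) (\<lambda>v'. real (ct v' u)) * real L = (\<Sum>i<L. E i)"
    using E1 L0 by simp
  also have "\<dots> = (\<Sum>i<L. C0 - Rem i + T i)" using E2 by simp
  also have "\<dots> = real L * C0 - real k * C0 + (\<Sum>i<L. T i)"
    using R by (simp add: sum.distrib sum_subtractf)
  finally show ?thesis using MT C0ct L_def by (simp add: algebra_simps)
qed



lemma step_support:
  assumes ml: "mutation_law d P" and sv: "set v \<subseteq> {..<d}" and vne: "v \<noteq> []"
  shows "finite (set_pmf (mutation_step P v))"
    and "v' \<in> set_pmf (mutation_step P v) \<Longrightarrow> \<exists>i<length v. \<exists>\<eta>\<in>set_pmf (P (v ! i)). v' = take i v @ \<eta> @ drop (Suc i) v"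
proof -
  have vi: "v ! i < d" if "i < length v" for i using sv that nth_mem by blast
  have S: "set_pmf (mutation_step P v) = (\<Union>i\<in>{..<length v}. (\<lambda>\<eta>. take i v @ \<eta> @ drop (Suc i) v) ` set_pmf (P (v ! i)))"
  proof -
    have "set_pmf (pmf_of_set {..<length v}) = {..<length v}" using vne by (intro set_pmf_of_set) auto
    then show ?thesis unfolding mutation_step_def by simp
  qed
  show "finite (set_pmf (mutation_step P v))" unfolding S
    using ml vi by (auto simp: mutation_law_def)
  show "v' \<in> set_pmf (mutation_step P v) \<Longrightarrow> \<exists>i<length v. \<exists>\<eta>\<in>set_pmf (P (v ! i)). v' = take i v @ \<eta> @ drop (Suc i) v"
    unfolding S by auto
qed

lemma tau_pos:
  assumes tl: "tau_mutation_law d \<tau> P" and "0 < d"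
  shows "1 \<le> \<tau>"
proof -
  obtain \<eta> where "\<eta> \<in> set_pmf (P 0)" using set_pmf_not_empty by fast
  then have "\<eta> \<noteq> []" "length \<eta> = \<tau>" using tl assms(2) unfolding tau_mutation_law_def mutation_law_def
    by auto
  then show ?thesis by (cases \<eta>) auto
qed

lemma sys_props:
  assumes tl: "tau_mutation_law d \<tau> P" and sw: "set w \<subseteq> {..<d}" and wne: "w \<noteq> []"
  shows "finite (set_pmf (mutation_system P w n)) \<and>
    (\<forall>v\<in>set_pmf (mutation_system P w n). length v = length w + n * (\<tau> - 1) \<and> set v \<subseteq> {..<d})"
proof (induction n)
  case 0 then show ?case using sw by simp
next
  case (Suc n)
  have ml: "mutation_law d P" using tl by (simp add: tau_mutation_law_def)
  have d0: "0 < d" using sw wne by (cases w) auto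
  have t1: "1 \<le> \<tau>" by (rule tau_pos[OF tl d0])
  have vne: "v \<noteq> []" if "v \<in> set_pmf (mutation_system P w n)" for v
    using Suc.IH that wne by (cases v) auto
  have "finite (set_pmf (mutation_system P w (Suc n)))"
    using Suc.IH step_support(1)[OF ml _ vne] by simp
  moreover have "length v' = length w + Suc n * (\<tau> - 1) \<and> set v' \<subseteq> {..<d}"
    if v'in: "v' \<in> set_pmf (mutation_system P w (Suc n))" for v'
  proof -
    obtain v where v: "v \<in> set_pmf (mutation_system P w n)" and v': "v' \<in> set_pmf (mutation_step P v)"
    proof -
      from v'in have "v' \<in> (\<Union>v\<in>set_pmf (mutation_system P w n). set_pmf (mutation_step P v))" by simp
      then show ?thesis using that by blast
    qed
    have lv: "length v = length w + n * (\<tau> - 1)" and sv: "set v \<subseteq> {..<d}" using Suc.IH v by auto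
    obtain i \<eta> where i: "i < length v" and eta: "\<eta> \<in> set_pmf (P (v ! i))"
      and e: "v' = take i v @ \<eta> @ drop (Suc i) v"
      using step_support(2)[OF ml sv vne[OF v] v'] by blast
    have vi: "v ! i < d" using sv i nth_mem by blast
    have le: "length \<eta> = \<tau>" and se: "set \<eta> \<subseteq> {..<d}" using tl vi eta
      by (auto simp: tau_mutation_law_def mutation_law_def)
    have "length v' = length v - 1 + \<tau>" using e i le by simp
    also have "\<dots> = length w + Suc n * (\<tau> - 1)"
    proof -
      obtain t where "\<tau> = Suc t" using t1 by (cases \<tau>) auto
      then show ?thesis using lv i by simp
    qed
    finally show ?thesis using e se sv set_take_subset[of i v] set_drop_subset[of "Suc i" v] by auto
  qed
  ultimately show ?case by blast
qed


lemma exp_rec: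
  assumes tl: "tau_mutation_law d \<tau> P" and sw: "set w \<subseteq> {..<d}" and wne: "w \<noteq> []"
    and k1: "1 \<le> k" and kw: "k \<le> length w" and u: "u \<in> words d k"
  shows "measure_pmf.expectation (mutation_system P w (Suc n)) (\<lambda>v. real (ct v u)) * real (length w + n * (\<tau> - 1))
    = (real (length w + n * (\<tau> - 1)) - real k) * measure_pmf.expectation (mutation_system P w n) (\<lambda>v. real (ct v u))
      + (\<Sum>x\<in>words d k. subst_matrix d k P u x * measure_pmf.expectation (mutation_system P w n) (\<lambda>v. real (ct v x)))"
proof -
  define A where "A = set_pmf (mutation_system P w n)"
  define m where "m = length w + n * (\<tau> - 1)"
  have ml: "mutation_law d P" using tl by (simp add: tau_mutation_law_def)
  have finA: "finite A" and props: "\<And>a. a \<in> A \<Longrightarrow> length a = m \<and> set a \<subseteq> {..<d}"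
    using sys_props[OF tl sw wne, of n] unfolding A_def m_def by auto
  have km: "k \<le> m" using kw unfolding m_def by simp
  have ane: "a \<noteq> []" if "a \<in> A" for a using props[OF that] km k1 by auto
  have EX: "measure_pmf.expectation (mutation_system P w n) (\<lambda>v. real (ct v x)) = (\<Sum>a\<in>A. real (ct a x) * pmf (mutation_system P w n) a)" for x
    unfolding A_def by (rule integral_measure_pmf_real) (use finA A_def in auto)
  have "measure_pmf.expectation (mutation_system P w (Suc n)) (\<lambda>v. real (ct v u))
      = (\<Sum>a\<in>A. pmf (mutation_system P w n) a *\<^sub>R measure_pmf.expectation (mutation_step P a) (\<lambda>v. real (ct v u)))"
    unfolding mutation_system.simps
    by (rule pmf_expectation_bind[OF finA]) (use step_support(1)[OF ml _ ane] props A_def in auto)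
  then have "measure_pmf.expectation (mutation_system P w (Suc n)) (\<lambda>v. real (ct v u)) * real m
      = (\<Sum>a\<in>A. pmf (mutation_system P w n) a * (measure_pmf.expectation (mutation_step P a) (\<lambda>v. real (ct v u)) * real (length a)))"
    using props by (simp add: sum_distrib_right mult.assoc)
  also have "\<dots> = (\<Sum>a\<in>A. pmf (mutation_system P w n) a * ((real m - real k) * real (ct a u) + (\<Sum>x\<in>words d k. subst_matrix d k P u x * real (ct a x))))"
  proof (rule sum.cong[OF refl])
    fix a assume a: "a \<in> A"
    show "pmf (mutation_system P w n) a * (measure_pmf.expectation (mutation_step P a) (\<lambda>v. real (ct v u)) * real (length a))
      = pmf (mutation_system P w n) a * ((real m - real k) * real (ct a u) + (\<Sum>x\<in>words d k. subst_matrix d k P u x * real (ct a x)))"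
      using step_expect[OF ml _ k1 _ u, of a] props[OF a] km by simp
  qed
  also have "\<dots> = (real m - real k) * (\<Sum>a\<in>A. real (ct a u) * pmf (mutation_system P w n) a)
      + (\<Sum>x\<in>words d k. subst_matrix d k P u x * (\<Sum>a\<in>A. real (ct a x) * pmf (mutation_system P w n) a))"
  proof -
    have 1: "(\<Sum>a\<in>A. pmf (mutation_system P w n) a * ((real m - real k) * real (ct a u))) = (real m - real k) * (\<Sum>a\<in>A. real (ct a u) * pmf (mutation_system P w n) a)"
      by (simp add: sum_distrib_left algebra_simps)
    have "(\<Sum>a\<in>A. pmf (mutation_system P w n) a * (\<Sum>x\<in>words d k. subst_matrix d k P u x * real (ct a x)))
       = (\<Sum>a\<in>A. \<Sum>x\<in>words d k. subst_matrix d k P u x * (real (ct a x) * pmf (mutation_system P w n) a))"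
      by (simp add: sum_distrib_left algebra_simps)
    also have "\<dots> = (\<Sum>x\<in>words d k. subst_matrix d k P u x * (\<Sum>a\<in>A. real (ct a x) * pmf (mutation_system P w n) a))"
      by (subst sum.swap) (simp add: sum_distrib_left)
    finally show ?thesis using 1 by (simp add: distrib_left sum.distrib)
  qed
  finally show ?thesis unfolding m_def[symmetric] EX .
qed


lemma wmat_vec_mult: "wmat_vec d k (wmat_mult d k B C) x u = wmat_vec d k B (wmat_vec d k C x) u"
proof -
  have "wmat_vec d k (wmat_mult d k B C) x u = (\<Sum>v\<in>words d k. \<Sum>y\<in>words d k. B u y * C y v * x v)"
    unfolding wmat_vec_def wmat_mult_def by (simp add: sum_distrib_right)
  also have "\<dots> = (\<Sum>y\<in>words d k. \<Sum>v\<in>words d k. B u y * (C y v * x v))"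
    by (subst sum.swap) (simp add: mult.assoc)
  also have "\<dots> = wmat_vec d k B (wmat_vec d k C x) u"
    unfolding wmat_vec_def by (simp add: sum_distrib_left)
  finally show ?thesis .
qed

lemma wmat_vec_cong: "(\<And>v. v \<in> words d k \<Longrightarrow> y v = y' v) \<Longrightarrow> wmat_vec d k C y u = wmat_vec d k C y' u"
  unfolding wmat_vec_def by (intro sum.cong refl) simp

lemma wmat_vec_id: "u \<in> words d k \<Longrightarrow> wmat_vec d k wmat_id y u = y u"
proof -
  assume u: "u \<in> words d k"
  have "(\<Sum>v\<in>words d k. (if u = v then 1 else 0) * y v) = (\<Sum>v\<in>words d k. if u = v then y v else 0)"
    by (intro sum.cong refl) simp
  also have "\<dots> = y u" using u finite_words by (simp add: sum.delta)
  finally show ?thesis unfolding wmat_vec_def wmat_id_def .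
qed

lemma prod_comm:
  assumes comm: "\<And>j x u. u \<in> words d k \<Longrightarrow> wmat_vec d k (A j) (wmat_vec d k B x) u = wmat_vec d k B (wmat_vec d k (A j) x) u"
  shows "u \<in> words d k \<Longrightarrow> wmat_vec d k (wmat_prod d k A n) (wmat_vec d k B x) u = wmat_vec d k B (wmat_vec d k (wmat_prod d k A n) x) u"
proof (induction n arbitrary: x u)
  case 0
  have "wmat_vec d k B (wmat_vec d k wmat_id x) u = wmat_vec d k B x u"
    by (rule wmat_vec_cong) (simp add: wmat_vec_id)
  then show ?case using 0 by (simp add: wmat_vec_id)
next
  case (Suc n)
  have "wmat_vec d k (wmat_prod d k A (Suc n)) (wmat_vec d k B x) u
      = wmat_vec d k (wmat_prod d k A n) (wmat_vec d k (A n) (wmat_vec d k B x)) u"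
    by (simp add: wmat_vec_mult)
  also have "\<dots> = wmat_vec d k (wmat_prod d k A n) (wmat_vec d k B (wmat_vec d k (A n) x)) u"
    by (rule wmat_vec_cong) (rule comm)
  also have "\<dots> = wmat_vec d k B (wmat_vec d k (wmat_prod d k A n) (wmat_vec d k (A n) x)) u"
    by (rule Suc.IH[OF Suc.prems])
  also have "\<dots> = wmat_vec d k B (wmat_vec d k (wmat_prod d k A (Suc n)) x) u"
    by (rule wmat_vec_cong) (simp add: wmat_vec_mult)
  finally show ?case .
qed

lemma aff_vec:
  assumes "u \<in> words d k"
  shows "wmat_vec d k (\<lambda>x y. a * (M x y + b * wmat_id x y)) z u = a * (wmat_vec d k M z u + b * z u)"
proof -
  have "wmat_vec d k (\<lambda>x y. a * (M x y + b * wmat_id x y)) z u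
      = a * (wmat_vec d k M z u + b * wmat_vec d k wmat_id z u)"
    unfolding wmat_vec_def by (simp add: sum.distrib sum_distrib_left algebra_simps)
  then show ?thesis using wmat_vec_id[OF assms] by simp
qed

lemma wmat_vec_lin: "wmat_vec d k M (\<lambda>v. a * (f v + b * g v)) u = a * (wmat_vec d k M f u + b * wmat_vec d k M g u)"
  unfolding wmat_vec_def by (simp add: sum.distrib sum_distrib_left algebra_simps)

lemma aff_comm:
  assumes u: "u \<in> words d k"
  shows "wmat_vec d k (\<lambda>x y. a1 * (M x y + b1 * wmat_id x y)) (wmat_vec d k (\<lambda>x y. a2 * (M x y + b2 * wmat_id x y)) z) u
       = wmat_vec d k (\<lambda>x y. a2 * (M x y + b2 * wmat_id x y)) (wmat_vec d k (\<lambda>x y. a1 * (M x y + b1 * wmat_id x y)) z) u"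
proof -
  have gen: "wmat_vec d k (\<lambda>x y. a1 * (M x y + b1 * wmat_id x y)) (wmat_vec d k (\<lambda>x y. a2 * (M x y + b2 * wmat_id x y)) z) u
     = a1 * a2 * (wmat_vec d k M (wmat_vec d k M z) u + (b1 + b2) * wmat_vec d k M z u + b1 * b2 * z u)" for a1 b1 a2 b2
  proof -
    have "wmat_vec d k (\<lambda>x y. a1 * (M x y + b1 * wmat_id x y)) (wmat_vec d k (\<lambda>x y. a2 * (M x y + b2 * wmat_id x y)) z) u
      = a1 * (wmat_vec d k M (wmat_vec d k (\<lambda>x y. a2 * (M x y + b2 * wmat_id x y)) z) u
         + b1 * (a2 * (wmat_vec d k M z u + b2 * z u)))"
      using u by (simp add: aff_vec)
    also have "wmat_vec d k M (wmat_vec d k (\<lambda>x y. a2 * (M x y + b2 * wmat_id x y)) z) u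
       = wmat_vec d k M (\<lambda>v. a2 * (wmat_vec d k M z v + b2 * z v)) u"
      by (rule wmat_vec_cong) (simp add: aff_vec)
    also have "\<dots> = a2 * (wmat_vec d k M (wmat_vec d k M z) u + b2 * wmat_vec d k M z u)"
      by (rule wmat_vec_lin)
    finally show ?thesis by (simp add: algebra_simps)
  qed
  show ?thesis unfolding gen by (simp add: algebra_simps)
qed

theorem mainTheorem6:
  fixes d \<tau> k n :: nat and P :: "nat \<Rightarrow> nat list pmf" and w :: "nat list"
  assumes "tau_mutation_law d \<tau> P"
    and "w \<noteq> []" and "set w \<subseteq> {..<d}"
    and "1 \<le> k" and "k \<le> length w"
  shows "\<forall>u\<in>words d k.
     measure_pmf.expectation (mutation_system P w n) (\<lambda>v. fr v u)
       = measure_pmf.expectation (mutation_system P w n) (\<lambda>v. real (ct v u))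
           / (real (length w) + real n * (real \<tau> - 1))
   \<and> measure_pmf.expectation (mutation_system P w n) (\<lambda>v. real (ct v u))
           / (real (length w) + real n * (real \<tau> - 1))
       = 1 / (real (length w) + real n * (real \<tau> - 1)) *
         wmat_vec d k
           (wmat_prod d k (\<lambda>j x y. 1 / (real (length w) + real j * (real \<tau> - 1)) *
               (subst_matrix d k P x y
                 + (real (length w) + real j * (real \<tau> - 1) - real k) * wmat_id x y)) n)
           (\<lambda>v. real (ct w v)) u"
proof -
  define mr where "mr j = real (length w) + real j * (real \<tau> - 1)" for j :: nat
  define A where "A = (\<lambda>j x y. 1 / (real (length w) + real j * (real \<tau> - 1)) *
               (subst_matrix d k P x y
                 + (real (length w) + real j * (real \<tau> - 1) - real k) * wmat_id x y))"
  define c where "c n u = measure_pmf.expectation (mutation_system P w n) (\<lambda>v. real (ct v u))" for n u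
  have tl: "tau_mutation_law d \<tau> P" by fact
  have sw: "set w \<subseteq> {..<d}" and wne: "w \<noteq> []" and k1: "1 \<le> k" and kw: "k \<le> length w" by fact+
  have d0: "0 < d" using sw wne by (cases w) auto
  have t1: "1 \<le> \<tau>" by (rule tau_pos[OF tl d0])
  have mr_nat: "real (length w + j * (\<tau> - 1)) = mr j" for j
    unfolding mr_def using t1 by (simp add: of_nat_diff)
  have mr_pos: "mr j > 0" for j using mr_nat[of j] wne by (metis length_greater_0_conv of_nat_0_less_iff trans_less_add1)
  have Aj: "A j = (\<lambda>x y. (1 / mr j) * (subst_matrix d k P x y + (mr j - real k) * wmat_id x y))" for j
    unfolding A_def mr_def by simp
  have comm: "wmat_vec d k (A j) (wmat_vec d k (A n) x) u = wmat_vec d k (A n) (wmat_vec d k (A j) x) u"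
    if "u \<in> words d k" for j n x u
    unfolding Aj by (rule aff_comm[OF that])
  have key: "\<forall>u\<in>words d k. c n u = wmat_vec d k (wmat_prod d k A n) (\<lambda>v. real (ct w v)) u" for n
  proof (induction n)
    case 0
    have "c 0 u = real (ct w u)" for u
      unfolding c_def by (simp add: integral_measure_pmf_real[of "{w}"])
    then show ?case by (simp add: wmat_vec_id)
  next
    case (Suc n)
    show ?case
    proof
      fix u assume u: "u \<in> words d k"
      have "c (Suc n) u * mr n = (mr n - real k) * c n u + (\<Sum>x\<in>words d k. subst_matrix d k P u x * c n x)"
        using exp_rec[OF tl sw wne k1 kw u, of n] unfolding c_def mr_nat .
      then have "c (Suc n) u = (1 / mr n) * (wmat_vec d k (subst_matrix d k P) (c n) u + (mr n - real k) * c n u)"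
        using mr_pos[of n] unfolding wmat_vec_def by (simp add: field_simps)
      also have "\<dots> = wmat_vec d k (A n) (c n) u"
        unfolding Aj by (rule aff_vec[symmetric, OF u])
      also have "\<dots> = wmat_vec d k (A n) (wmat_vec d k (wmat_prod d k A n) (\<lambda>v. real (ct w v))) u"
        by (rule wmat_vec_cong) (use Suc.IH in auto)
      also have "\<dots> = wmat_vec d k (wmat_prod d k A n) (wmat_vec d k (A n) (\<lambda>v. real (ct w v))) u"
        by (rule prod_comm[symmetric, OF comm u])
      also have "\<dots> = wmat_vec d k (wmat_prod d k A (Suc n)) (\<lambda>v. real (ct w v)) u"
        by (simp add: wmat_vec_mult)
      finally show "c (Suc n) u = wmat_vec d k (wmat_prod d k A (Suc n)) (\<lambda>v. real (ct w v)) u" .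
    qed
  qed
  have frE: "measure_pmf.expectation (mutation_system P w n) (\<lambda>v. fr v u) = c n u / mr n" for u
  proof -
    define S where "S = set_pmf (mutation_system P w n)"
    have finS: "finite S" and props: "\<And>a. a \<in> S \<Longrightarrow> length a = length w + n * (\<tau> - 1)"
      using sys_props[OF tl sw wne, of n] unfolding S_def by auto
    have "measure_pmf.expectation (mutation_system P w n) (\<lambda>v. fr v u) = (\<Sum>a\<in>S. fr a u * pmf (mutation_system P w n) a)"
      by (rule integral_measure_pmf_real) (use finS S_def in auto)
    also have "\<dots> = (\<Sum>a\<in>S. real (ct a u) * pmf (mutation_system P w n) a) / mr n"
      unfolding sum_divide_distrib
    proof (rule sum.cong[OF refl])
      fix a assume a: "a \<in> S"
      have "real (length a) = mr n" by (simp only: props[OF a] mr_nat)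
      then show "fr a u * pmf (mutation_system P w n) a = real (ct a u) * pmf (mutation_system P w n) a / mr n"
        by (simp add: fr_def)
    qed
    also have "(\<Sum>a\<in>S. real (ct a u) * pmf (mutation_system P w n) a) = c n u"
      unfolding c_def by (rule integral_measure_pmf_real[symmetric]) (use finS S_def in auto)
    finally show ?thesis .
  qed
  show ?thesis
  proof
    fix u assume u: "u \<in> words d k"
    show "measure_pmf.expectation (mutation_system P w n) (\<lambda>v. fr v u)
       = measure_pmf.expectation (mutation_system P w n) (\<lambda>v. real (ct v u))
           / (real (length w) + real n * (real \<tau> - 1))
   \<and> measure_pmf.expectation (mutation_system P w n) (\<lambda>v. real (ct v u))
           / (real (length w) + real n * (real \<tau> - 1))
       = 1 / (real (length w) + real n * (real \<tau> - 1)) *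
         wmat_vec d k
           (wmat_prod d k (\<lambda>j x y. 1 / (real (length w) + real j * (real \<tau> - 1)) *
               (subst_matrix d k P x y
                 + (real (length w) + real j * (real \<tau> - 1) - real k) * wmat_id x y)) n)
           (\<lambda>v. real (ct w v)) u"
    proof (rule conjI)
      show "measure_pmf.expectation (mutation_system P w n) (\<lambda>v. fr v u)
       = measure_pmf.expectation (mutation_system P w n) (\<lambda>v. real (ct v u))
           / (real (length w) + real n * (real \<tau> - 1))"
        using frE[of u] unfolding c_def mr_def .
      have h: "c n u = wmat_vec d k (wmat_prod d k A n) (\<lambda>v. real (ct w v)) u" using key u by blast
      have "c n u / mr n = 1 / mr n * wmat_vec d k (wmat_prod d k A n) (\<lambda>v. real (ct w v)) u"
        using h by simp
      then show "measure_pmf.expectation (mutation_system P w n) (\<lambda>v. real (ct v u))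
           / (real (length w) + real n * (real \<tau> - 1))
       = 1 / (real (length w) + real n * (real \<tau> - 1)) *
         wmat_vec d k
           (wmat_prod d k (\<lambda>j x y. 1 / (real (length w) + real j * (real \<tau> - 1)) *
               (subst_matrix d k P x y
                 + (real (length w) + real j * (real \<tau> - 1) - real k) * wmat_id x y)) n)
           (\<lambda>v. real (ct w v)) u"
        unfolding c_def mr_def A_def .
    qed
  qed
qed


end
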